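(* For the $2$-cache problem, there is no knowledge state algorithm that is $\tfrac32$-competitive as a knowledge state algorithm and all of whose knowledge states have at most two active pages.
   Context: The $2$-cache problem: an infinite set $P$ of pages; states are the $2$-element subsets of $P$, with a given initial cache $s^0$; requests are pages; $d(x,y)=|x\setminus y|$; $\mathrm{cost}(x,r,y)=2$ if $x=y$ and $r\notin x$, $=d(x,y)$ if $r\in x$ or $r\in y$, and $=d(x,y)+1$ otherwise. $\Pi$ is the set of finitely supported probability distributions on states; $\mathrm{cost}(\pi,r,\pi')$ is the minimum of $\sum_{x,y}\gamma(x,y)\mathrm{cost}(x,r,y)$ over distributions $\gamma$ on $\mathrm{supp}(\pi)\times\mathrm{supp}(\pi')$ with marginals $\pi,\pi'$. An estimator is a function $\omega\ge0$ on states with $\omega(y)\le\omega(x)+d(x,y)$; a set $S$ supports $\omega$ if each $y$ has $x\in S$ with $\omega(y)=\omega(x)+d(x,y)$, and the estimator support is the minimal such set. The update is $(\omega\wedge r)(y)=\inf_x\{\omega(x)+\mathrm{cost}(x,r,y)\}$. Knowledge state algorithm $\mathcal A$: a knowledge state is a pair $k=(\pi,\omega)$, $\pi\in\Pi$, $\omega$ an estimator with finite support; initial state $(s^0,\omega^0)$ with $\omega^0(s^0)=0$. For each $k=(\pi,\omega)$ and request $r$, $\mathcal A$ specifies subsequents $k_i=(\pi_i,\omega_i)$ with weights $\lambda_i>0$ summing to $1$ (next state $k_i$ with probability $\lambda_i$) and a number $\mathrm{adjust}(k,r)$ with $(\omega\wedge r)(x)\ge\mathrm{adjust}(k,r)+\sum_i\lambda_i\omega_i(x)$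 for all $x$. Step cost $\mathrm{cost}(\pi,r,\sum_i\lambda_i\pi_i)$; $\mathrm{cost}_{\mathcal A}(\varrho)$ and $\mathrm{adjust}_{\mathcal A}(\varrho)$ are the sums over the steps. $\mathcal A$ is $C$-competitive as a knowledge state algorithm if there is $K$ with $E(\mathrm{cost}_{\mathcal A}(\varrho))\le C\cdot E(\mathrm{adjust}_{\mathcal A}(\varrho)+\omega^n(x))+K$ for every $\varrho=r^1\dots r^n$ and every state $x$, where $\omega^n$ is the estimator after $n$ steps. The active pages of a knowledge state $(\pi,\omega)$ are the pages belonging to some configuration in the distributional support of $\pi$ or in the estimator support of $\omega$. *)

theory Defs
  imports "HOL-Probability.Probability_Mass_Function"
begin

text \<open>Pages are elements of a type 'p (assumed infinite in the theorem);
  states (cache configurations) are 2-element sets of pages.\<close>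

definition states :: "'p set set" where
  "states = {x. finite x \<and> card x = 2}"

definition dist :: "'p set \<Rightarrow> 'p set \<Rightarrow> nat" where
  "dist x y = card (x - y)"

definition cost :: "'p set \<Rightarrow> 'p \<Rightarrow> 'p set \<Rightarrow> nat" where
  "cost x r y =
     (if x = y \<and> r \<notin> x then 2
      else if r \<in> x \<or> r \<in> y then dist x y
      else dist x y + 1)"

definition Pi_dist :: "'p set pmf set" where
  "Pi_dist = {\<pi>. finite (set_pmf \<pi>) \<and> set_pmf \<pi> \<subseteq> states}"

text \<open>Cost between distributions: minimum over couplings (with the given
  marginals; such a coupling is automatically supported on the product of
  the supports).\<close>
definition pcost :: "'p set pmf \<Rightarrow> 'p \<Rightarrow> 'p set pmf \<Rightarrow> real" where
  "pcost \<pi> r \<pi>' =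
     Inf {measure_pmf.expectation \<gamma> (\<lambda>(x, y). real (cost x r y)) | \<gamma>.
            map_pmf fst \<gamma> = \<pi> \<and> map_pmf snd \<gamma> = \<pi>'}"

definition estimator :: "('p set \<Rightarrow> real) \<Rightarrow> bool" where
  "estimator \<omega> \<longleftrightarrow>
     (\<forall>x\<in>states. 0 \<le> \<omega> x) \<and>
     (\<forall>x\<in>states. \<forall>y\<in>states. \<omega> y \<le> \<omega> x + real (dist x y))"

definition supports :: "'p set set \<Rightarrow> ('p set \<Rightarrow> real) \<Rightarrow> bool" where
  "supports S \<omega> \<longleftrightarrow> S \<subseteq> states \<and>
     (\<forall>y\<in>states. \<exists>x\<in>S. \<omega> y = \<omega> x + real (dist x y))"

definition est_support :: "('p set \<Rightarrow> real) \<Rightarrow> 'p set set" where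
  "est_support \<omega> = \<Inter> {S. supports S \<omega>}"

definition update :: "('p set \<Rightarrow> real) \<Rightarrow> 'p \<Rightarrow> 'p set \<Rightarrow> real" where
  "update \<omega> r y = (INF x\<in>states. \<omega> x + real (cost x r y))"

type_synonym 'p kstate = "'p set pmf \<times> ('p set \<Rightarrow> real)"

definition is_kstate :: "'p kstate \<Rightarrow> bool" where
  "is_kstate k \<longleftrightarrow> fst k \<in> Pi_dist \<and> estimator (snd k) \<and>
     (\<exists>S. finite S \<and> supports S (snd k))"

definition active_pages :: "'p kstate \<Rightarrow> 'p set" where
  "active_pages k = \<Union> (set_pmf (fst k)) \<union> \<Union> (est_support (snd k))"

text \<open>An algorithm maps a knowledge state and a request to a distribution on
  subsequent knowledge states (subsequent k_i chosen with probability
  lambda_i) together with an adjustment value.\<close>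

inductive_set reachable :: "'p kstate \<Rightarrow> ('p kstate \<Rightarrow> 'p \<Rightarrow> 'p kstate pmf) \<Rightarrow> 'p kstate set"
  for k0 A where
  init: "k0 \<in> reachable k0 A"
| step: "k \<in> reachable k0 A \<Longrightarrow> k' \<in> set_pmf (A k r) \<Longrightarrow> k' \<in> reachable k0 A"

definition ks_algorithm ::
  "'p set \<Rightarrow> ('p set \<Rightarrow> real) \<Rightarrow> ('p kstate \<Rightarrow> 'p \<Rightarrow> 'p kstate pmf) \<Rightarrow> ('p kstate \<Rightarrow> 'p \<Rightarrow> real) \<Rightarrow> bool"
  where
  "ks_algorithm s0 \<omega>0 A adj \<longleftrightarrow>
     is_kstate (return_pmf s0, \<omega>0) \<and> \<omega>0 s0 = 0 \<and>
     (\<forall>k\<in>reachable (return_pmf s0, \<omega>0) A. \<forall>r.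
        finite (set_pmf (A k r)) \<and>
        (\<forall>k'\<in>set_pmf (A k r). is_kstate k') \<and>
        (\<forall>x\<in>states. update (snd k) r x \<ge>
            adj k r + measure_pmf.expectation (A k r) (\<lambda>k'. snd k' x)))"

definition step_cost :: "('p kstate \<Rightarrow> 'p \<Rightarrow> 'p kstate pmf) \<Rightarrow> 'p kstate \<Rightarrow> 'p \<Rightarrow> real" where
  "step_cost A k r = pcost (fst k) r (bind_pmf (A k r) (\<lambda>k'. fst k'))"

text \<open>Distribution of (final knowledge state, total cost, total adjust) after
  serving a request sequence.\<close>
primrec run ::
  "('p kstate \<Rightarrow> 'p \<Rightarrow> 'p kstate pmf) \<Rightarrow> ('p kstate \<Rightarrow> 'p \<Rightarrow> real) \<Rightarrow> 'p kstate \<Rightarrow> 'p list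
     \<Rightarrow> ('p kstate \<times> real \<times> real) pmf" where
  "run A adj k [] = return_pmf (k, 0, 0)"
| "run A adj k (r # rs) =
     bind_pmf (A k r) (\<lambda>k'. map_pmf (\<lambda>(kn, c, a). (kn, step_cost A k r + c, adj k r + a))
                                     (run A adj k' rs))"

definition ks_competitive ::
  "real \<Rightarrow> 'p set \<Rightarrow> ('p set \<Rightarrow> real) \<Rightarrow> ('p kstate \<Rightarrow> 'p \<Rightarrow> 'p kstate pmf) \<Rightarrow> ('p kstate \<Rightarrow> 'p \<Rightarrow> real) \<Rightarrow> bool"
  where
  "ks_competitive C s0 \<omega>0 A adj \<longleftrightarrow>
     (\<exists>K. \<forall>\<rho>. \<forall>x\<in>states.
        measure_pmf.expectation (run A adj (return_pmf s0, \<omega>0) \<rho>) (\<lambda>(kn, c, a). c)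
        \<le> C * measure_pmf.expectation (run A adj (return_pmf s0, \<omega>0) \<rho>)
                (\<lambda>(kn, c, a). a + snd kn x) + K)"

end

theory Submission
  imports Defs
begin


lemma states_fin: "x \<in> states \<Longrightarrow> finite x" and states_card: "x \<in> states \<Longrightarrow> card x = 2"
  by (auto simp: states_def)

lemma dist_tri: "finite x \<Longrightarrow> finite y \<Longrightarrow> Defs.dist x z \<le> Defs.dist x y + Defs.dist y z"
proof -
  assume "finite x" "finite y"
  have "x - z \<subseteq> (x - y) \<union> (y - z)" by blast
  hence "card (x - z) \<le> card ((x - y) \<union> (y - z))"
    by (intro card_mono) (use \<open>finite x\<close> \<open>finite y\<close> in auto)
  also have "\<dots> \<le> card (x - y) + card (y - z)" by (rule card_Un_le)
  finally show ?thesis by (simp add: Defs.dist_def)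
qed

lemma dist_sym: "x \<in> states \<Longrightarrow> y \<in> states \<Longrightarrow> Defs.dist x y = Defs.dist y x"
proof -
  assume a: "x \<in> states" "y \<in> states"
  have fx: "finite x" and fy: "finite y" and cx: "card x = 2" and cy: "card y = 2"
    using a by (auto simp: states_def)
  have "card (x - y) = card x - card (x \<inter> y)" by (rule card_Diff_subset_Int) (use fx in auto)
  moreover have "card (y - x) = card y - card (y \<inter> x)" by (rule card_Diff_subset_Int) (use fy in auto)
  ultimately show ?thesis using cx cy by (simp add: Defs.dist_def Int_commute)
qed

lemma dist_self[simp]: "Defs.dist x x = 0" by (simp add: Defs.dist_def)

lemma dist_pos: "x \<in> states \<Longrightarrow> y \<in> states \<Longrightarrow> x \<noteq> y \<Longrightarrow> Defs.dist x y \<ge> 1"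
proof (rule ccontr)
  assume a: "x \<in> states" "y \<in> states" "x \<noteq> y" "\<not> Defs.dist x y \<ge> 1"
  hence "card (x - y) = 0" by (simp add: Defs.dist_def)
  hence "x \<subseteq> y" using a by (auto simp: states_def)
  hence "x = y" using a by (metis card_subset_eq states_card states_fin)
  thus False using a by simp
qed

lemma dist_le2: "x \<in> states \<Longrightarrow> Defs.dist x y \<le> 2"
proof -
  assume a: "x \<in> states"
  hence "card (x - y) \<le> card x" by (intro card_mono) (auto simp: states_def)
  thus ?thesis using a by (simp add: Defs.dist_def states_def)
qed

lemma cost_ge_dist: "Defs.dist x y \<le> cost x r y"
  unfolding cost_def by auto

lemma cost_ge1: "s \<in> states \<Longrightarrow> s' \<in> states \<Longrightarrow> \<not> (s' = s \<and> r \<in> s) \<Longrightarrow> cost s r s' \<ge> 1"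
proof (cases "s' = s")
  case True
  assume "\<not> (s' = s \<and> r \<in> s)"
  thus ?thesis using True by (simp add: cost_def)
next
  case False
  assume "s \<in> states" "s' \<in> states"
  hence "1 \<le> Defs.dist s s'" using False dist_pos by metis
  thus ?thesis using cost_ge_dist[of s s' r] by linarith
qed

lemma cost_hit: "r \<in> s \<Longrightarrow> cost s r s = 0"
  unfolding cost_def by simp



lemma est_form:
  assumes est: "estimator \<omega>" and fS: "finite S" and sup: "supports S \<omega>"
    and only: "\<And>x. x \<in> est_support \<omega> \<Longrightarrow> x = s"
    and y: "y \<in> states"
  shows "\<omega> y = \<omega> s + real (Defs.dist s y)"
proof -
  have Sst: "S \<subseteq> states" using sup by (simp add: supports_def)
  define T where "T = {x \<in> S. \<omega> y = \<omega> x + real (Defs.dist x y)}"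
  have Tne: "T \<noteq> {}" using sup y by (auto simp: supports_def T_def)
  have fT: "finite T" using fS by (simp add: T_def)
  obtain x where xT: "x \<in> T" and xmin: "\<And>x'. x' \<in> T \<Longrightarrow> \<omega> x \<le> \<omega> x'"
  proof -
    have "Min (\<omega> ` T) \<in> \<omega> ` T" using fT Tne by (intro Min_in) auto
    then obtain x where "x \<in> T" "\<omega> x = Min (\<omega> ` T)" by auto
    moreover have "\<And>x'. x' \<in> T \<Longrightarrow> Min (\<omega> ` T) \<le> \<omega> x'" using fT by (intro Min_le) auto
    ultimately show ?thesis using that by metis
  qed
  have xs: "x \<in> states" "\<omega> y = \<omega> x + real (Defs.dist x y)" using xT Sst by (auto simp: T_def)
  have chain: "\<omega> y = \<omega> z + real (Defs.dist z y)"
    if "z \<in> states" "w \<in> states" "\<omega> y = \<omega> w + real (Defs.dist w y)"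
       "\<omega> w = \<omega> z + real (Defs.dist z w)" for z w
  proof -
    have "Defs.dist z y \<le> Defs.dist z w + Defs.dist w y"
      using that by (intro dist_tri) (auto simp: states_def)
    hence "\<omega> z + real (Defs.dist z y) \<le> \<omega> y" using that by linarith
    moreover have "\<omega> y \<le> \<omega> z + real (Defs.dist z y)" using est that(1) y unfolding estimator_def by blast
    ultimately show ?thesis by linarith
  qed
  have "x \<in> est_support \<omega>"
    unfolding est_support_def
  proof (rule InterI)
    fix S' assume "S' \<in> {S. supports S \<omega>}"
    hence sup': "supports S' \<omega>" by simp
    then obtain x' where x': "x' \<in> S'" "\<omega> x = \<omega> x' + real (Defs.dist x' x)"
      using xs by (auto simp: supports_def)
    have x'st: "x' \<in> states" using sup' x' by (auto simp: supports_def)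
    show "x \<in> S'"
    proof (rule ccontr)
      assume "x \<notin> S'"
      hence ne: "x' \<noteq> x" using x' by auto
      have lt: "\<omega> x' < \<omega> x" using dist_pos[OF x'st xs(1) ne] x' by linarith
      have y1: "\<omega> y = \<omega> x' + real (Defs.dist x' y)" using chain[OF x'st xs(1) xs(2) x'(2)] .
      obtain x'' where x'': "x'' \<in> S" "\<omega> x' = \<omega> x'' + real (Defs.dist x'' x')"
        using sup x'st by (auto simp: supports_def)
      have x''st: "x'' \<in> states" using x'' Sst by auto
      have "\<omega> y = \<omega> x'' + real (Defs.dist x'' y)" using chain[OF x''st x'st y1 x''(2)] .
      hence "x'' \<in> T" using x'' by (simp add: T_def)
      hence "\<omega> x \<le> \<omega> x''" by (rule xmin)
      moreover have "\<omega> x'' \<le> \<omega> x'" using x'' by simp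
      ultimately show False using lt by linarith
    qed
  qed
  hence "x = s" by (rule only)
  thus ?thesis using xs by simp
qed



definition loc :: "'p kstate \<Rightarrow> 'p set" where "loc k = (SOME s. fst k = return_pmf s)"
definition V :: "'p kstate \<Rightarrow> real" where "V k = snd k (loc k)"

lemma good_of:
  assumes ks: "is_kstate k" and fin: "finite (active_pages k)" and c2: "card (active_pages k) \<le> 2"
  shows "loc k \<in> states \<and> fst k = return_pmf (loc k) \<and>
         (\<forall>y\<in>states. snd k y = V k + real (Defs.dist (loc k) y))"
proof -
  have Pi: "finite (set_pmf (fst k))" "set_pmf (fst k) \<subseteq> states"
    using ks by (auto simp: is_kstate_def Pi_dist_def)
  obtain s where s: "s \<in> set_pmf (fst k)" using set_pmf_not_empty by fast
  have sst: "s \<in> states" using s Pi by auto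
  have sub: "s \<subseteq> active_pages k" using s by (auto simp: active_pages_def)
  have act: "active_pages k = s"
    using card_subset_eq[OF fin sub] sub c2 sst card_mono[OF fin sub]
    by (simp add: states_card)
  have eqs: "t = s" if "t \<in> states" "t \<subseteq> s" for t
    using that sst by (metis card_subset_eq states_card states_fin)
  have "set_pmf (fst k) \<subseteq> {s}"
  proof
    fix t assume t: "t \<in> set_pmf (fst k)"
    hence "t \<subseteq> active_pages k" by (auto simp: active_pages_def)
    thus "t \<in> {s}" using eqs t Pi act by auto
  qed
  hence fk: "fst k = return_pmf s" by (simp add: set_pmf_subset_singleton)
  hence ls: "loc k = s" unfolding loc_def by (rule someI2) simp
  obtain S where S: "finite S" "supports S (snd k)" using ks by (auto simp: is_kstate_def)
  have est: "estimator (snd k)" using ks by (simp add: is_kstate_def)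
  have only: "x = s" if "x \<in> est_support (snd k)" for x
  proof -
    have "x \<in> S" using that S by (auto simp: est_support_def)
    hence "x \<in> states" using S by (auto simp: supports_def)
    moreover have "x \<subseteq> s" using that act by (auto simp: active_pages_def)
    ultimately show ?thesis by (rule eqs)
  qed
  have "\<forall>y\<in>states. snd k y = V k + real (Defs.dist (loc k) y)"
    using est_form[OF est S only] ls unfolding V_def by blast
  thus ?thesis using ls fk sst by simp
qed

locale alg =
  fixes s0 :: "'p set" and \<omega>0 :: "'p set \<Rightarrow> real" and A :: "'p kstate \<Rightarrow> 'p \<Rightarrow> 'p kstate pmf"
    and adj :: "'p kstate \<Rightarrow> 'p \<Rightarrow> real"
  assumes alg: "ks_algorithm s0 \<omega>0 A adj"
    and act: "\<forall>k\<in>reachable (return_pmf s0, \<omega>0) A. finite (active_pages k) \<and> card (active_pages k) \<le> 2"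
begin

abbreviation "R \<equiv> reachable (return_pmf s0, \<omega>0) A"

lemma R_props:
  assumes "k \<in> R"
  shows "finite (set_pmf (A k r))" "\<And>k'. k' \<in> set_pmf (A k r) \<Longrightarrow> is_kstate k'"
    "\<And>x. x \<in> states \<Longrightarrow> update (snd k) r x \<ge> adj k r + measure_pmf.expectation (A k r) (\<lambda>k'. snd k' x)"
  using alg assms unfolding ks_algorithm_def by blast+

lemma R_step: "k \<in> R \<Longrightarrow> k' \<in> set_pmf (A k r) \<Longrightarrow> k' \<in> R"
  by (rule reachable.step)

lemma R_kstate: "k \<in> R \<Longrightarrow> is_kstate k"
  by (induction rule: reachable.induct) (use alg R_props in \<open>auto simp: ks_algorithm_def\<close>)

lemma good:
  assumes "k \<in> R"
  shows "loc k \<in> states" "fst k = return_pmf (loc k)"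
    "\<And>y. y \<in> states \<Longrightarrow> snd k y = V k + real (Defs.dist (loc k) y)"
  using good_of[OF R_kstate[OF assms]] act assms by auto

lemma k0_R: "(return_pmf s0, \<omega>0) \<in> R" by (rule reachable.init)

lemma loc0: "loc (return_pmf s0, \<omega>0) = s0"
  unfolding loc_def by (rule someI2) auto

lemma V0: "V (return_pmf s0, \<omega>0) = 0"
  using alg by (simp add: V_def loc0 ks_algorithm_def)

lemma run_fin:
  assumes "k \<in> R"
  shows "finite (set_pmf (run A adj k \<rho>)) \<and> (\<forall>t\<in>set_pmf (run A adj k \<rho>). fst t \<in> R)"
  using assms
proof (induction \<rho> arbitrary: k)
  case Nil thus ?case by simp
next
  case (Cons r \<rho>)
  have f: "finite (set_pmf (A k r))" using R_props(1)[OF Cons.prems] .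
  have ih: "\<And>k'. k' \<in> set_pmf (A k r) \<Longrightarrow> finite (set_pmf (run A adj k' \<rho>)) \<and> (\<forall>t\<in>set_pmf (run A adj k' \<rho>). fst t \<in> R)"
    using Cons.IH R_step[OF Cons.prems] by blast
  have "finite (set_pmf (run A adj k (r # \<rho>)))" using f ih by (auto simp: set_bind_pmf)
  moreover have "fst t \<in> R" if t: "t \<in> set_pmf (run A adj k (r # \<rho>))" for t
  proof -
    from t obtain k' u where k': "k' \<in> set_pmf (A k r)" and u: "u \<in> set_pmf (run A adj k' \<rho>)"
      and tu: "t = (\<lambda>(kn, c, a). (kn, step_cost A k r + c, adj k r + a)) u"
      by (auto simp: set_bind_pmf)
    have "fst t = fst u" using tu by (cases u) auto
    thus ?thesis using ih[OF k'] u by auto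
  qed
  ultimately show ?case by blast
qed

end



lemma exp_sum:
  fixes f :: "'a \<Rightarrow> real"
  assumes "finite (set_pmf p)"
  shows "measure_pmf.expectation p f = (\<Sum>a\<in>set_pmf p. pmf p a * f a)"
  using integral_measure_pmf_real[of "set_pmf p" p f] assms by (simp add: mult.commute)

lemma sum_pmf1: "finite (set_pmf p) \<Longrightarrow> (\<Sum>a\<in>set_pmf p. pmf p a) = 1"
  by (rule sum_pmf_eq_1) auto

lemma pcost_point:
  fixes \<nu> :: "'p set pmf"
  shows "pcost (return_pmf s) r \<nu> \<ge> measure_pmf.expectation \<nu> (\<lambda>y. real (cost s r y))"
  unfolding pcost_def
proof (rule cInf_greatest)
  let ?g = "pair_pmf (return_pmf s) \<nu>"
  show "{measure_pmf.expectation \<gamma> (\<lambda>(x, y). real (cost x r y)) |\<gamma>.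
        map_pmf fst \<gamma> = return_pmf s \<and> map_pmf snd \<gamma> = \<nu>} \<noteq> {}"
    using map_fst_pair_pmf[of "return_pmf s" \<nu>] map_snd_pair_pmf[of "return_pmf s" \<nu>] by blast
next
  fix e assume "e \<in> {measure_pmf.expectation \<gamma> (\<lambda>(x, y). real (cost x r y)) |\<gamma>.
        map_pmf fst \<gamma> = return_pmf s \<and> map_pmf snd \<gamma> = \<nu>}"
  then obtain \<gamma> where e: "e = measure_pmf.expectation \<gamma> (\<lambda>(x, y). real (cost x r y))"
    and g1: "map_pmf fst \<gamma> = return_pmf s" and g2: "map_pmf snd \<gamma> = \<nu>" by blast
  have fs: "fst p = s" if "p \<in> set_pmf \<gamma>" for p
  proof -
    have "fst p \<in> set_pmf (map_pmf fst \<gamma>)" using that by simp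
    thus ?thesis using g1 by simp
  qed
  have "e = measure_pmf.expectation \<gamma> (\<lambda>p. real (cost s r (snd p)))"
    unfolding e by (intro integral_cong_AE AE_pmfI) (auto dest: fs split: prod.splits)
  also have "\<dots> = measure_pmf.expectation (map_pmf snd \<gamma>) (\<lambda>y. real (cost s r y))" by simp
  finally show "measure_pmf.expectation \<nu> (\<lambda>y. real (cost s r y)) \<le> e" using g2 by simp
qed

context alg begin

lemma step_cost_ge:
  assumes k: "k \<in> R"
  shows "step_cost A k r \<ge> (\<Sum>k'\<in>set_pmf (A k r). pmf (A k r) k' * real (cost (loc k) r (loc k')))"
proof -
  have f: "finite (set_pmf (A k r))" using R_props(1)[OF k] .
  have "bind_pmf (A k r) fst = bind_pmf (A k r) (\<lambda>k'. return_pmf (loc k'))"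
    by (intro bind_pmf_cong refl) (use good(2) R_step[OF k] in blast)
  also have "\<dots> = map_pmf loc (A k r)" by (simp add: map_pmf_def)
  finally have b: "bind_pmf (A k r) fst = map_pmf loc (A k r)" .
  have "step_cost A k r = pcost (return_pmf (loc k)) r (map_pmf loc (A k r))"
    unfolding step_cost_def b using good(2)[OF k] by simp
  also have "\<dots> \<ge> measure_pmf.expectation (map_pmf loc (A k r)) (\<lambda>y. real (cost (loc k) r y))"
    by (rule pcost_point)
  finally show ?thesis using exp_sum[OF f] by simp
qed

end



definition hh :: "(nat \<Rightarrow> 'p) \<Rightarrow> nat \<Rightarrow> 'p set \<Rightarrow> nat" where
  "hh q j s = (if q j \<notin> s then 0 else if q (Suc j) \<notin> s then 1 else 2)"

primrec seqq :: "(nat \<Rightarrow> 'p) \<Rightarrow> nat \<Rightarrow> nat \<Rightarrow> 'p list" where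
  "seqq q j 0 = []"
| "seqq q j (Suc n) = q j # seqq q (Suc j) n"

lemma hh_le: "hh q j s \<le> 2" by (simp add: hh_def)

lemma hh_hit:
  assumes s: "s \<in> states" and d1: "\<forall>j. q j \<noteq> q (Suc j)" and d2: "\<forall>j. q j \<noteq> q (Suc (Suc j))"
    and hit: "q j \<in> s"
  shows "hh q (Suc j) s + 1 = hh q j s"
proof (cases "q (Suc j) \<in> s")
  case False thus ?thesis using hit by (simp add: hh_def)
next
  case True
  have "s = {q j, q (Suc j)}"
  proof -
    have "{q j, q (Suc j)} \<subseteq> s" using True hit by auto
    moreover have "card {q j, q (Suc j)} = 2" using d1 by simp
    ultimately show ?thesis using s by (metis card_subset_eq states_card states_fin)
  qed
  hence "q (Suc (Suc j)) \<notin> s" using d1 d2 by (metis insert_iff singletonD)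
  thus ?thesis using True hit by (simp add: hh_def)
qed

lemma pathwise:
  assumes s: "s \<in> states" and s': "s' \<in> states"
    and d1: "\<forall>j. q j \<noteq> q (Suc j)" and d2: "\<forall>j. q j \<noteq> q (Suc (Suc j))"
  shows "3 * real (cost s (q j) s') \<ge> 1 + real (hh q (Suc j) s') - real (hh q j s)"
proof (cases "s' = s \<and> q j \<in> s")
  case True
  thus ?thesis using hh_hit[OF s d1 d2, of j] cost_hit[of "q j" s] by simp
next
  case False
  hence "cost s (q j) s' \<ge> 1" by (intro cost_ge1 s s')
  thus ?thesis using hh_le[of q "Suc j" s'] by simp
qed

lemma sumP_mono:
  fixes f g :: "'a \<Rightarrow> real"
  shows "(\<And>a. a \<in> set_pmf p \<Longrightarrow> f a \<le> g a) \<Longrightarrow> (\<Sum>a\<in>set_pmf p. pmf p a * f a) \<le> (\<Sum>a\<in>set_pmf p. pmf p a * g a)"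
  by (intro sum_mono mult_left_mono) auto

lemma sumP_const:
  "finite (set_pmf p) \<Longrightarrow> (\<Sum>a\<in>set_pmf p. pmf p a * (c::real)) = c"
  by (simp add: sum_distrib_right[symmetric] sum_pmf1)

lemma sumP_add:
  fixes f g :: "'a \<Rightarrow> real"
  shows "(\<Sum>a\<in>set_pmf p. pmf p a * (f a + g a)) = (\<Sum>a\<in>set_pmf p. pmf p a * f a) + (\<Sum>a\<in>set_pmf p. pmf p a * g a)"
  by (simp add: distrib_left sum.distrib)

lemma sumP_diff:
  fixes f g :: "'a \<Rightarrow> real"
  shows "(\<Sum>a\<in>set_pmf p. pmf p a * (f a - g a)) = (\<Sum>a\<in>set_pmf p. pmf p a * f a) - (\<Sum>a\<in>set_pmf p. pmf p a * g a)"
  by (simp add: right_diff_distrib sum_subtractf)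

lemma sumP_cmul:
  fixes f :: "'a \<Rightarrow> real"
  shows "(\<Sum>a\<in>set_pmf p. pmf p a * (c * f a)) = c * (\<Sum>a\<in>set_pmf p. pmf p a * f a)"
  by (simp add: sum_distrib_left mult.left_commute)

context alg begin

lemma update_le:
  assumes k: "k \<in> R" and x: "x \<in> states"
  shows "update (snd k) r x \<le> V k + real (cost (loc k) r x)"
proof -
  have est: "estimator (snd k)" using R_kstate[OF k] by (simp add: is_kstate_def)
  have "bdd_below ((\<lambda>x'. snd k x' + real (cost x' r x)) ` states)"
    by (rule bdd_belowI2[where m=0]) (use est in \<open>auto simp: estimator_def\<close>)
  hence "update (snd k) r x \<le> snd k (loc k) + real (cost (loc k) r x)"
    unfolding update_def by (rule cINF_lower) (rule good(1)[OF k])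
  thus ?thesis by (simp add: V_def)
qed

lemma adj_ineq:
  assumes k: "k \<in> R" and x: "x \<in> states"
  shows "adj k r + (\<Sum>k'\<in>set_pmf (A k r). pmf (A k r) k' * V k')
           + (\<Sum>k'\<in>set_pmf (A k r). pmf (A k r) k' * real (Defs.dist (loc k') x))
         \<le> V k + real (cost (loc k) r x)"
proof -
  have f: "finite (set_pmf (A k r))" using R_props(1)[OF k] .
  have "measure_pmf.expectation (A k r) (\<lambda>k'. snd k' x)
        = (\<Sum>k'\<in>set_pmf (A k r). pmf (A k r) k' * (V k' + real (Defs.dist (loc k') x)))"
    unfolding exp_sum[OF f]
  proof (intro sum.cong refl)
    fix k' assume "k' \<in> set_pmf (A k r)"
    hence "k' \<in> R" using R_step[OF k] by blast
    thus "pmf (A k r) k' * snd k' x = pmf (A k r) k' * (V k' + real (Defs.dist (loc k') x))"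
      using good(3) x by simp
  qed
  also have "\<dots> = (\<Sum>k'\<in>set_pmf (A k r). pmf (A k r) k' * V k')
           + (\<Sum>k'\<in>set_pmf (A k r). pmf (A k r) k' * real (Defs.dist (loc k') x))"
    by (rule sumP_add)
  finally show ?thesis using R_props(3)[OF k x, of r] update_le[OF k x, of r] by linarith
qed

end

locale alg3 = alg s0 \<omega>0 A adj for s0 :: "'p set" and \<omega>0 A adj +
  fixes q :: "nat \<Rightarrow> 'p"
  assumes d1: "\<forall>j. q j \<noteq> q (Suc j)" and d2: "\<forall>j. q j \<noteq> q (Suc (Suc j))"
begin

lemma step_main:
  assumes k: "k \<in> R"
  shows "step_cost A k (q j) - 3/2 * adj k (q j)
           - 3/2 * (\<Sum>k'\<in>set_pmf (A k (q j)). pmf (A k (q j)) k' * V k')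
           - (\<Sum>k'\<in>set_pmf (A k (q j)). pmf (A k (q j)) k' * real (hh q (Suc j) (loc k'))) / 12
         \<ge> 1/12 - 3/2 * V k - real (hh q j (loc k)) / 12"
proof -
  let ?r = "q j"
  let ?\<mu> = "A k ?r"
  let ?M = "set_pmf ?\<mu>"
  define s where "s = loc k"
  have sst: "s \<in> states" using good(1)[OF k] by (simp add: s_def)
  have f: "finite ?M" using R_props(1)[OF k] .
  have l': "loc k' \<in> states" if "k' \<in> ?M" for k' using good(1)[OF R_step[OF k that]] .
  define EC where "EC = (\<Sum>k'\<in>?M. pmf ?\<mu> k' * real (cost s ?r (loc k')))"
  define EV where "EV = (\<Sum>k'\<in>?M. pmf ?\<mu> k' * V k')"
  define EH where "EH = (\<Sum>k'\<in>?M. pmf ?\<mu> k' * real (hh q (Suc j) (loc k')))"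
  have sc: "step_cost A k ?r \<ge> EC" using step_cost_ge[OF k] by (simp add: EC_def s_def)
  have EC0: "EC \<ge> 0" unfolding EC_def by (intro sum_nonneg) auto
  have adjx: "adj k ?r + EV + (\<Sum>k'\<in>?M. pmf ?\<mu> k' * real (Defs.dist (loc k') x)) \<le> V k + real (cost s ?r x)"
    if "x \<in> states" for x using adj_ineq[OF k that] by (simp add: EV_def s_def)
  have a: "EC \<ge> 2 * (adj k ?r + EV - V k)"
  proof (cases "?r \<in> s")
    case True
    have "(\<Sum>k'\<in>?M. pmf ?\<mu> k' * real (Defs.dist (loc k') s)) \<ge> 0" by (intro sum_nonneg) auto
    thus ?thesis using adjx[OF sst] cost_hit[OF True] EC0 by simp
  next
    case False
    obtain a b where ab: "s = {a, b}" "a \<noteq> b" using sst by (auto simp: states_def card_2_iff)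
    have ra: "?r \<noteq> a" "?r \<noteq> b" using False ab by auto
    define x1 where "x1 = {a, ?r}"
    define x2 where "x2 = {b, ?r}"
    have x12: "x1 \<in> states" "x2 \<in> states" using ra by (auto simp: x1_def x2_def states_def)
    have "s - x1 = {b}" using ab ra by (auto simp: x1_def)
    hence c1: "cost s ?r x1 = 1" by (simp add: cost_def x1_def Defs.dist_def)
    have "s - x2 = {a}" using ab ra by (auto simp: x2_def)
    hence c2: "cost s ?r x2 = 1" by (simp add: cost_def x2_def Defs.dist_def)
    have "x1 - x2 = {a}" using ab ra by (auto simp: x1_def x2_def)
    hence d12: "Defs.dist x1 x2 = 1" by (simp add: Defs.dist_def)
    have pw: "real (Defs.dist (loc k') x1) + real (Defs.dist (loc k') x2) \<ge> 1" if "k' \<in> ?M" for k'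
    proof -
      have "Defs.dist x1 x2 \<le> Defs.dist x1 (loc k') + Defs.dist (loc k') x2"
        using x12 l'[OF that] by (intro dist_tri) (auto simp: states_def)
      moreover have "Defs.dist x1 (loc k') = Defs.dist (loc k') x1" using dist_sym x12 l'[OF that] by blast
      ultimately show ?thesis using d12 by simp
    qed
    have "(\<Sum>k'\<in>?M. pmf ?\<mu> k' * (real (Defs.dist (loc k') x1) + real (Defs.dist (loc k') x2)))
          \<ge> (\<Sum>k'\<in>?M. pmf ?\<mu> k' * 1)"
      by (rule sumP_mono) (rule pw)
    hence S1: "(\<Sum>k'\<in>?M. pmf ?\<mu> k' * real (Defs.dist (loc k') x1))
              + (\<Sum>k'\<in>?M. pmf ?\<mu> k' * real (Defs.dist (loc k') x2)) \<ge> 1"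
      by (simp only: sumP_add sumP_const[OF f])
    have "EC \<ge> (\<Sum>k'\<in>?M. pmf ?\<mu> k' * 1)"
      unfolding EC_def by (rule sumP_mono) (use cost_ge1[OF sst l'] False in auto)
    hence "EC \<ge> 1" by (simp only: sumP_const[OF f])
    thus ?thesis using adjx[OF x12(1)] adjx[OF x12(2)] c1 c2 S1 by simp
  qed
  have "(\<Sum>k'\<in>?M. pmf ?\<mu> k' * (3 * real (cost s ?r (loc k'))))
        \<ge> (\<Sum>k'\<in>?M. pmf ?\<mu> k' * ((1 - real (hh q j s)) + real (hh q (Suc j) (loc k'))))"
  proof (rule sumP_mono)
    fix k' assume "k' \<in> ?M"
    from pathwise[OF sst l'[OF this] d1 d2, of j]
    show "1 - real (hh q j s) + real (hh q (Suc j) (loc k')) \<le> 3 * real (cost s (q j) (loc k'))"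
      by linarith
  qed
  hence b: "3 * EC \<ge> 1 - real (hh q j s) + EH"
    by (simp only: sumP_add sumP_cmul sumP_const[OF f] EC_def EH_def)
  show ?thesis using sc a b by (simp add: EV_def EH_def s_def)
qed

end



context alg3 begin

lemma main_ind:
  assumes "k \<in> R"
  shows "measure_pmf.expectation (run A adj k (seqq q j n))
           (\<lambda>(kn, c, a). c - 3/2 * (a + V kn) - real (hh q (j + n) (loc kn)) / 12)
         \<ge> real n / 12 - 3/2 * V k - real (hh q j (loc k)) / 12"
  using assms
proof (induction n arbitrary: j k)
  case 0
  thus ?case by simp
next
  case (Suc n)
  let ?r = "q j"
  let ?\<mu> = "A k ?r"
  let ?M = "set_pmf ?\<mu>"
  define F where "F = (\<lambda>(kn, c, a). c - 3/2 * (a + V kn) - real (hh q (j + Suc n) (loc kn)) / 12)"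
  define F' where "F' = (\<lambda>(kn, c, a). c - 3/2 * (a + V kn) - real (hh q (Suc j + n) (loc kn)) / 12)"
  define g :: "'p kstate \<times> real \<times> real \<Rightarrow> 'p kstate \<times> real \<times> real"
    where "g = (\<lambda>(kn, c, a). (kn, step_cost A k ?r + c, adj k ?r + a))"
  define c0 where "c0 = step_cost A k ?r - 3/2 * adj k ?r"
  have f: "finite ?M" using R_props(1)[OF Suc.prems] .
  have k'R: "k' \<in> R" if "k' \<in> ?M" for k' using R_step[OF Suc.prems that] .
  have fr: "finite (set_pmf (run A adj k' (seqq q (Suc j) n)))" if "k' \<in> ?M" for k'
    using run_fin[OF k'R[OF that]] by blast
  have Fg: "F (g u) = c0 + F' u" for u
    by (cases u) (simp add: F_def F'_def g_def c0_def algebra_simps)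
  have inner: "measure_pmf.expectation (map_pmf g (run A adj k' (seqq q (Suc j) n))) F
      \<ge> c0 + (real n / 12 - 3/2 * V k' - real (hh q (Suc j) (loc k')) / 12)" if k': "k' \<in> ?M" for k'
  proof -
    let ?p = "run A adj k' (seqq q (Suc j) n)"
    have "measure_pmf.expectation (map_pmf g ?p) F = measure_pmf.expectation ?p (\<lambda>u. c0 + F' u)"
      by (simp add: Fg)
    also have "\<dots> = (\<Sum>u\<in>set_pmf ?p. pmf ?p u * (c0 + F' u))" by (rule exp_sum[OF fr[OF k']])
    also have "\<dots> = c0 + (\<Sum>u\<in>set_pmf ?p. pmf ?p u * F' u)"
      by (simp only: sumP_add sumP_const[OF fr[OF k']])
    also have "(\<Sum>u\<in>set_pmf ?p. pmf ?p u * F' u) = measure_pmf.expectation ?p F'"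
      by (rule exp_sum[OF fr[OF k'], symmetric])
    finally show ?thesis using Suc.IH[OF k'R[OF k'], of "Suc j"] by (simp add: F'_def)
  qed
  have "run A adj k (seqq q j (Suc n)) = bind_pmf ?\<mu> (\<lambda>k'. map_pmf g (run A adj k' (seqq q (Suc j) n)))"
    by (simp add: g_def)
  hence E1: "measure_pmf.expectation (run A adj k (seqq q j (Suc n))) F
        = (\<Sum>k'\<in>?M. pmf ?\<mu> k' * measure_pmf.expectation (map_pmf g (run A adj k' (seqq q (Suc j) n))) F)"
    using pmf_expectation_bind[OF f, of "\<lambda>k'. map_pmf g (run A adj k' (seqq q (Suc j) n))" ?\<mu> F] fr
    by simp
  have E2: "(\<Sum>k'\<in>?M. pmf ?\<mu> k' * measure_pmf.expectation (map_pmf g (run A adj k' (seqq q (Suc j) n))) F)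
     \<ge> (\<Sum>k'\<in>?M. pmf ?\<mu> k' * (c0 + (real n / 12 - 3/2 * V k' - real (hh q (Suc j) (loc k')) / 12)))"
    by (rule sumP_mono) (rule inner)
  from E1 E2 have E: "measure_pmf.expectation (run A adj k (seqq q j (Suc n))) F
     \<ge> (\<Sum>k'\<in>?M. pmf ?\<mu> k' * (c0 + (real n / 12 - 3/2 * V k' - real (hh q (Suc j) (loc k')) / 12)))"
    by simp
  have "(\<Sum>k'\<in>?M. pmf ?\<mu> k' * (c0 + (real n / 12 - 3/2 * V k' - real (hh q (Suc j) (loc k')) / 12)))
      = c0 + real n / 12 - 3/2 * (\<Sum>k'\<in>?M. pmf ?\<mu> k' * V k')
         - (\<Sum>k'\<in>?M. pmf ?\<mu> k' * real (hh q (Suc j) (loc k'))) / 12"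
  proof -
    have "(\<Sum>k'\<in>?M. pmf ?\<mu> k' * (c0 + (real n / 12 - 3/2 * V k' - real (hh q (Suc j) (loc k')) / 12)))
       = (\<Sum>k'\<in>?M. pmf ?\<mu> k' * (c0 + real n / 12)) - 3/2 * (\<Sum>k'\<in>?M. pmf ?\<mu> k' * V k')
         - (1/12) * (\<Sum>k'\<in>?M. pmf ?\<mu> k' * real (hh q (Suc j) (loc k')))"
      by (simp add: sum_subtractf sum.distrib sum_distrib_left algebra_simps)
    thus ?thesis by (simp add: sumP_const[OF f])
  qed
  note S = this
  have X: "real n / 12 + 1/12 - 3/2 * V k - real (hh q j (loc k)) / 12
      \<le> measure_pmf.expectation (run A adj k (seqq q j (Suc n))) F"
    using E S step_main[OF Suc.prems, of j] c0_def by linarith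
  have "real (Suc n) = real n + 1" by simp
  hence Y: "real (Suc n) / 12 - 3/2 * V k - real (hh q j (loc k)) / 12
      \<le> measure_pmf.expectation (run A adj k (seqq q j (Suc n))) F"
    using X by (simp add: add_divide_distrib)
  show ?case using Y unfolding F_def .
qed

end

lemma mod3_distinct:
  fixes a b c :: 'p
  assumes "a \<noteq> b" "a \<noteq> c" "b \<noteq> c"
  defines "q \<equiv> (\<lambda>j::nat. if j mod 3 = 0 then a else if j mod 3 = 1 then b else c)"
  shows "\<forall>j. q j \<noteq> q (Suc j)" "\<forall>j. q j \<noteq> q (Suc (Suc j))"
proof -
  have m: "j mod 3 = 0 \<or> j mod 3 = 1 \<or> j mod 3 = 2" for j :: nat by arith
  show "\<forall>j. q j \<noteq> q (Suc j)"
  proof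
    fix j :: nat
    show "q j \<noteq> q (Suc j)" using m[of j] assms(1-3) by (auto simp: q_def mod_Suc)
  qed
  show "\<forall>j. q j \<noteq> q (Suc (Suc j))"
  proof
    fix j :: nat
    show "q j \<noteq> q (Suc (Suc j))" using m[of j] assms(1-3) by (auto simp: q_def mod_Suc)
  qed
qed

theorem mainTheorem11:
  fixes s0 :: "'p set"
  assumes "infinite (UNIV :: 'p set)"
    and "s0 \<in> states"
  shows "\<not> (\<exists>\<omega>0 A adj.
              ks_algorithm s0 \<omega>0 A adj \<and>
              ks_competitive (3/2) s0 \<omega>0 A adj \<and>
              (\<forall>k\<in>reachable (return_pmf s0, \<omega>0) A.
                 finite (active_pages k) \<and> card (active_pages k) \<le> 2))"
proof
  assume "\<exists>\<omega>0 A adj.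
              ks_algorithm s0 \<omega>0 A adj \<and>
              ks_competitive (3/2) s0 \<omega>0 A adj \<and>
              (\<forall>k\<in>reachable (return_pmf s0, \<omega>0) A.
                 finite (active_pages k) \<and> card (active_pages k) \<le> 2)"
  then obtain \<omega>0 A adj where alg: "ks_algorithm s0 \<omega>0 A adj"
    and comp: "ks_competitive (3/2) s0 \<omega>0 A adj"
    and act: "\<forall>k\<in>reachable (return_pmf s0, \<omega>0) A. finite (active_pages k) \<and> card (active_pages k) \<le> 2"
    by blast
  obtain a :: 'p where True by blast
  obtain b :: 'p where b: "b \<noteq> a" using ex_new_if_finite[OF assms(1), of "{a}"] by auto
  obtain c :: 'p where c: "c \<noteq> a" "c \<noteq> b" using ex_new_if_finite[OF assms(1), of "{a, b}"] by auto
  define q where "q = (\<lambda>j::nat. if j mod 3 = 0 then a else if j mod 3 = 1 then b else c)"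
  have d: "\<forall>j. q j \<noteq> q (Suc j)" "\<forall>j. q j \<noteq> q (Suc (Suc j))"
    using mod3_distinct[of a b c] b c unfolding q_def by auto
  interpret alg3 s0 \<omega>0 A adj q
    by unfold_locales (use alg act d in auto)
  obtain K where K: "\<And>\<rho> x. x \<in> states \<Longrightarrow>
      measure_pmf.expectation (run A adj (return_pmf s0, \<omega>0) \<rho>) (\<lambda>(kn, c, a). c)
      \<le> 3/2 * measure_pmf.expectation (run A adj (return_pmf s0, \<omega>0) \<rho>) (\<lambda>(kn, c, a). a + snd kn x) + K"
    using comp unfolding ks_competitive_def by blast
  define n :: nat where "n = nat \<lceil>12 * \<bar>K\<bar>\<rceil> + 48"
  have nK: "real n / 12 > K + 3 + 1/6"
  proof -
    have "real n \<ge> 12 * \<bar>K\<bar> + 48" unfolding n_def by linarith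
    thus ?thesis by linarith
  qed
  let ?k0 = "(return_pmf s0, \<omega>0)"
  let ?p = "run A adj ?k0 (seqq q 0 n)"
  have fp: "finite (set_pmf ?p)" and pR: "\<And>t. t \<in> set_pmf ?p \<Longrightarrow> fst t \<in> R"
    using run_fin[OF k0_R] by blast+
  have M: "measure_pmf.expectation ?p
           (\<lambda>(kn, c, a). c - 3/2 * (a + V kn) - real (hh q (0 + n) (loc kn)) / 12)
         \<ge> real n / 12 - 3/2 * V ?k0 - real (hh q 0 (loc ?k0)) / 12"
    by (rule main_ind[OF k0_R])
  have lowb: "real n / 12 - 3/2 * V ?k0 - real (hh q 0 (loc ?k0)) / 12 \<ge> real n / 12 - 1/6"
    using V0 hh_le[of q 0 "loc ?k0"] by simp
  define G :: "'p kstate \<times> real \<times> real \<Rightarrow> real" where "G = (\<lambda>(kn, c, a). c - 3/2 * (a + snd kn s0) + (3::real))"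
  have pt: "(\<lambda>(kn, c, a). c - 3/2 * (a + V kn) - real (hh q (0 + n) (loc kn)) / 12) t \<le> G t"
    if t: "t \<in> set_pmf ?p" for t
  proof -
    obtain kn c a where tt: "t = (kn, c, a)" by (cases t) auto
    have knR: "kn \<in> R" using pR[OF t] tt by simp
    have e: "snd kn s0 = V kn + real (Defs.dist (loc kn) s0)" using good(3)[OF knR assms(2)] .
    have "Defs.dist (loc kn) s0 \<le> 2" using dist_le2[OF good(1)[OF knR]] .
    hence h2: "real (Defs.dist (loc kn) s0) \<le> 2" by simp
    have h0: "0 \<le> real (hh q (0 + n) (loc kn))" by simp
    have "c - 3/2 * (a + V kn) - real (hh q (0 + n) (loc kn)) / 12 \<le> c - 3/2 * (a + V kn)"
      using h0 by linarith
    also have "\<dots> = c - 3/2 * (a + snd kn s0) + 3/2 * real (Defs.dist (loc kn) s0)"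
      using e by (simp add: algebra_simps)
    also have "\<dots> \<le> c - 3/2 * (a + snd kn s0) + 3" using h2 by linarith
    finally show ?thesis unfolding tt G_def by simp
  qed
  have "measure_pmf.expectation ?p
           (\<lambda>(kn, c, a). c - 3/2 * (a + V kn) - real (hh q (0 + n) (loc kn)) / 12)
        \<le> measure_pmf.expectation ?p G"
    unfolding exp_sum[OF fp] by (rule sumP_mono) (rule pt)
  also have "measure_pmf.expectation ?p G
      = measure_pmf.expectation ?p (\<lambda>(kn, c, a). c) - 3/2 * measure_pmf.expectation ?p (\<lambda>(kn, c, a). a + snd kn s0) + 3"
  proof -
    have "measure_pmf.expectation ?p G = (\<Sum>t\<in>set_pmf ?p. pmf ?p t * ((\<lambda>(kn, c, a). c) t
            - 3/2 * (\<lambda>(kn, c, a). a + snd kn s0) t + 3))"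
      unfolding exp_sum[OF fp] G_def by (intro sum.cong refl) (auto split: prod.splits)
    also have "\<dots> = (\<Sum>t\<in>set_pmf ?p. pmf ?p t * (\<lambda>(kn, c, a). c) t)
            - 3/2 * (\<Sum>t\<in>set_pmf ?p. pmf ?p t * (\<lambda>(kn, c, a). a + snd kn s0) t) + 3"
      by (simp only: sumP_add sumP_diff sumP_cmul sumP_const[OF fp])
    finally show ?thesis unfolding exp_sum[OF fp] .
  qed
  finally have "real n / 12 - 1/6 \<le> K + 3"
    using M lowb K[OF assms(2), of "seqq q 0 n"] by linarith
  thus False using nK by linarith
qed

end
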